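(* Let $(z,x)$ be a feasible solution of the cluster LP for vertex set $V$. Run the following cluster-based rounding: set $\mathcal C\gets\emptyset$, $V'\gets V$; while $V'\neq\emptyset$, choose a set $S$ at random with probability $z_S/\sum_{S'}z_{S'}$ (independently in each iteration), and if $V'\cap S\neq\emptyset$, add $V'\cap S$ to $\mathcal C$ and set $V'\gets V'\setminus S$; output $\mathcal C$. Then for every $uv\in\binom V2$, the probability that $u$ and $v$ are in different clusters of the output $\mathcal C$ is $\frac{2x_{uv}}{1+x_{uv}}$, and the probability that they are in the same cluster is $\frac{1-x_{uv}}{1+x_{uv}}$.
   Context: The cluster LP for a finite vertex set $V$ has a variable $z_S$ for every nonempty $S\subseteq V$ and $x_{uv}$ for every unordered pair $uv$ of distinct vertices, with constraints $\sum_{S\ni u}z_S=1$ for all $u\in V$, $\sum_{S\supseteq\{u,v\}}z_S=1-x_{uv}$ for all $uv$, and $z_S\ge0$. *)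

theory Defs
  imports "HOL-Probability.Probability"
begin

text \<open>The variable z_S (S a nonempty subset of V) is z S; the variable x_uv for the
  unordered pair uv is x {u,v}. Values of z outside nonempty subsets of V are irrelevant.\<close>

definition cluster_sets :: "'a set \<Rightarrow> 'a set set" where
  "cluster_sets V = {S. S \<subseteq> V \<and> S \<noteq> {}}"

definition cluster_lp_feasible :: "'a set \<Rightarrow> ('a set \<Rightarrow> real) \<Rightarrow> ('a set \<Rightarrow> real) \<Rightarrow> bool" where
  "cluster_lp_feasible V z x \<longleftrightarrow>
     (\<forall>u\<in>V. (\<Sum>S\<in>{S\<in>cluster_sets V. u \<in> S}. z S) = 1) \<and>
     (\<forall>u\<in>V. \<forall>v\<in>V. u \<noteq> v \<longrightarrow>
         (\<Sum>S\<in>{S\<in>cluster_sets V. {u, v} \<subseteq> S}. z S) = 1 - x {u, v}) \<and>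
     (\<forall>S\<in>cluster_sets V. z S \<ge> 0)"

definition rounding_pmf :: "'a set \<Rightarrow> ('a set \<Rightarrow> real) \<Rightarrow> 'a set pmf" where
  "rounding_pmf V z =
     embed_pmf (\<lambda>S. if S \<in> cluster_sets V then z S / (\<Sum>S'\<in>cluster_sets V. z S') else 0)"

text \<open>The independent draws of all iterations form an i.i.d. stream omega of sets
  (distributed according to the product measure). Before iteration i the remaining set is
  V' = V minus the union of the sets drawn in iterations < i; iteration i adds V' \<inter> omega!!i
  to the output if it is nonempty. Once V' is empty no further cluster is added, so the
  output of the algorithm is the following set of clusters.\<close>

definition remaining :: "'a set \<Rightarrow> 'a set stream \<Rightarrow> nat \<Rightarrow> 'a set" where
  "remaining V \<omega> i = V - (\<Union>j<i. \<omega> !! j)"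

definition rounding_output :: "'a set \<Rightarrow> 'a set stream \<Rightarrow> 'a set set" where
  "rounding_output V \<omega> = {remaining V \<omega> i \<inter> \<omega> !! i | i. remaining V \<omega> i \<inter> \<omega> !! i \<noteq> {}}"

definition rounding_space :: "'a set \<Rightarrow> ('a set \<Rightarrow> real) \<Rightarrow> 'a set stream measure" where
  "rounding_space V z = stream_space (measure_pmf (rounding_pmf V z))"

end

theory Submission
  imports Defs
begin

lemma hit_sets:
  fixes p :: "'b pmf" and A B :: "'b set"
  shows "{\<omega>. \<exists>i. (\<forall>j<i. \<omega>!!j \<notin> B) \<and> \<omega>!!i \<in> A} \<in> sets (stream_space (measure_pmf p))"
proof -
  let ?S = "stream_space (measure_pmf p)"
  have sp: "space ?S = UNIV" by (simp add: space_stream_space)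
  have sn: "{\<omega>. \<omega>!!i \<in> X} \<in> sets ?S" for i X
  proof -
    have "(\<lambda>\<omega>. \<omega>!!i) -` X \<inter> space ?S \<in> sets ?S"
      by (rule measurable_sets[OF measurable_snth]) simp
    then show ?thesis by (simp add: sp vimage_def)
  qed
  have "{\<omega>. \<exists>i. (\<forall>j<i. \<omega>!!j \<notin> B) \<and> \<omega>!!i \<in> A} = (\<Union>i. {\<omega>. \<omega>!!i \<in> A} - (\<Union>j\<in>{..<i}. {\<omega>. \<omega>!!j \<in> B}))"
    by auto
  also have "\<dots> \<in> sets ?S"
    using sn by (intro sets.countable_UN sets.Diff sets.finite_UN) auto
  finally show ?thesis .
qed

lemma hit_prob:
  fixes p :: "'b pmf" and A B :: "'b set"
  assumes AB: "A \<subseteq> B" and pos: "measure_pmf.prob p B > 0"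
  shows "measure (stream_space (measure_pmf p)) {\<omega>. \<exists>i. (\<forall>j<i. \<omega>!!j \<notin> B) \<and> \<omega>!!i \<in> A}
         = measure_pmf.prob p A / measure_pmf.prob p B"
proof -
  let ?S = "stream_space (measure_pmf p)"
  interpret S: prob_space ?S by (rule prob_space.prob_space_stream_space[OF prob_space_measure_pmf])
  define H where "H = {\<omega>. \<exists>i. (\<forall>j<i. \<omega>!!j \<notin> B) \<and> \<omega>!!i \<in> A}"
  have sp: "space ?S = UNIV" by (simp add: space_stream_space)
  have meas[measurable]: "H \<in> sets ?S"
  proof -
    have sn: "{\<omega>. \<omega>!!i \<in> X} \<in> sets ?S" for i X
    proof -
      have "(\<lambda>\<omega>. \<omega>!!i) -` X \<inter> space ?S \<in> sets ?S"
        by (rule measurable_sets[OF measurable_snth]) simp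
      then show ?thesis by (simp add: sp vimage_def)
    qed
    have "H = (\<Union>i. {\<omega>. \<omega>!!i \<in> A} - (\<Union>j\<in>{..<i}. {\<omega>. \<omega>!!j \<in> B}))"
      unfolding H_def by auto
    also have "\<dots> \<in> sets ?S"
      using sn by (intro sets.countable_UN sets.Diff sets.finite_UN) auto
    finally show ?thesis .
  qed
  have rec: "(x ## \<omega> \<in> H) = (x \<in> A \<or> (x \<notin> B \<and> \<omega> \<in> H))" for x \<omega>
  proof
    assume "x ## \<omega> \<in> H"
    then obtain i where i: "\<forall>j<i. (x##\<omega>)!!j \<notin> B" "(x##\<omega>)!!i \<in> A" unfolding H_def by blast
    show "x \<in> A \<or> (x \<notin> B \<and> \<omega> \<in> H)"
    proof (cases i)
      case 0 then show ?thesis using i by simp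
    next
      case (Suc k)
      have "x \<notin> B" using i(1)[rule_format, of 0] Suc by simp
      moreover have "\<omega> \<in> H" unfolding H_def
      proof (intro CollectI exI[of _ k] conjI allI impI)
        fix j assume "j < k" then show "\<omega> !! j \<notin> B"
          using i(1)[rule_format, of "Suc j"] Suc by simp
      qed (use i Suc in simp)
      ultimately show ?thesis by simp
    qed
  next
    assume "x \<in> A \<or> (x \<notin> B \<and> \<omega> \<in> H)"
    then show "x ## \<omega> \<in> H"
    proof
      assume "x \<in> A" then show ?thesis unfolding H_def by (intro CollectI exI[of _ 0]) simp
    next
      assume h: "x \<notin> B \<and> \<omega> \<in> H"
      then obtain i where i: "\<forall>j<i. \<omega>!!j \<notin> B" "\<omega>!!i \<in> A" unfolding H_def by blast
      show ?thesis unfolding H_def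
      proof (intro CollectI exI[of _ "Suc i"] conjI allI impI)
        fix j assume "j < Suc i" then show "(x ## \<omega>) !! j \<notin> B"
          using h i by (cases j) auto
      qed (use i in simp)
    qed
  qed
  have "emeasure ?S H = (\<integral>\<^sup>+t. emeasure ?S {\<omega>\<in>space ?S. t ## \<omega> \<in> H} \<partial>measure_pmf p)"
    by (rule prob_space.emeasure_stream_space[OF prob_space_measure_pmf]) simp
  also have "\<dots> = (\<integral>\<^sup>+t. indicator A t + indicator (-B) t * emeasure ?S H \<partial>measure_pmf p)"
  proof (rule nn_integral_cong)
    fix t
    show "emeasure ?S {\<omega>\<in>space ?S. t ## \<omega> \<in> H} = indicator A t + indicator (-B) t * emeasure ?S H"
    proof (cases "t \<in> A")
      case True
      then have "{\<omega>\<in>space ?S. t ## \<omega> \<in> H} = space ?S" using rec by auto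
      moreover have "t \<in> B" using True AB by auto
      ultimately show ?thesis using True S.emeasure_space_1 by simp
    next
      case False
      then have "{\<omega>\<in>space ?S. t ## \<omega> \<in> H} = (if t \<in> B then {} else H)" using rec sp by auto
      then show ?thesis using False by (auto split: split_indicator)
    qed
  qed
  also have "\<dots> = emeasure (measure_pmf p) A + emeasure (measure_pmf p) (-B) * emeasure ?S H"
    by (subst nn_integral_add) (auto simp: nn_integral_multc)
  finally have eq: "emeasure ?S H = emeasure (measure_pmf p) A + emeasure (measure_pmf p) (-B) * emeasure ?S H" .
  have c: "measure_pmf.prob p (-B) = 1 - measure_pmf.prob p B"
    using measure_pmf.prob_compl[of B p] by (simp add: Compl_eq_Diff_UNIV)
  have "ennreal (S.prob H) = ennreal (measure_pmf.prob p A + (1 - measure_pmf.prob p B) * S.prob H)"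
    using eq unfolding S.emeasure_eq_measure measure_pmf.emeasure_eq_measure c
    by (simp add: ennreal_mult' ennreal_plus)
  then have "S.prob H = measure_pmf.prob p A + (1 - measure_pmf.prob p B) * S.prob H"
    by (subst (asm) ennreal_inj) (auto intro!: add_nonneg_nonneg mult_nonneg_nonneg)
  then have "S.prob H * measure_pmf.prob p B = measure_pmf.prob p A"
    by (simp add: algebra_simps)
  then show ?thesis unfolding H_def[symmetric] using pos by (simp add: field_simps)
qed


lemma remaining_mem: "w \<in> remaining V \<omega> i \<longleftrightarrow> w \<in> V \<and> (\<forall>j<i. w \<notin> \<omega> !! j)"
  unfolding remaining_def by auto

lemma output_mem: "C \<in> rounding_output V \<omega> \<longleftrightarrow> (\<exists>i. C = remaining V \<omega> i \<inter> \<omega> !! i \<and> C \<noteq> {})"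
  unfolding rounding_output_def by blast

lemma output_memI: "w \<in> remaining V \<omega> i \<inter> \<omega> !! i \<Longrightarrow> remaining V \<omega> i \<inter> \<omega> !! i \<in> rounding_output V \<omega>"
  unfolding rounding_output_def by (intro CollectI exI[of _ i] conjI refl) blast

lemma output_memE: "C \<in> rounding_output V \<omega> \<Longrightarrow> \<exists>i. C = remaining V \<omega> i \<inter> \<omega> !! i"
  unfolding rounding_output_def by blast

lemma cluster_unique:
  assumes "w \<in> remaining V \<omega> i \<inter> \<omega> !! i" "w \<in> remaining V \<omega> k \<inter> \<omega> !! k"
  shows "i = k"
proof (rule ccontr)
  assume "i \<noteq> k"
  then have "i < k \<or> k < i" by arith
  then show False
  proof
    assume "i < k"
    moreover have "\<forall>j<k. w \<notin> \<omega> !! j" using assms(2) unfolding Int_iff remaining_mem by blast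
    ultimately show False using assms(1) by blast
  next
    assume "k < i"
    moreover have "\<forall>j<i. w \<notin> \<omega> !! j" using assms(1) unfolding Int_iff remaining_mem by blast
    ultimately show False using assms(2) by blast
  qed
qed

lemma same_iff:
  assumes "u \<in> V" "v \<in> V"
  shows "(\<exists>C\<in>rounding_output V \<omega>. u \<in> C \<and> v \<in> C) \<longleftrightarrow>
    (\<exists>i. (\<forall>j<i. \<omega>!!j \<notin> {S. u \<in> S \<or> v \<in> S}) \<and> \<omega>!!i \<in> {S. {u,v} \<subseteq> S})"
proof
  assume "\<exists>C\<in>rounding_output V \<omega>. u \<in> C \<and> v \<in> C"
  then obtain C where C: "C \<in> rounding_output V \<omega>" "u \<in> C" "v \<in> C" by blast
  then obtain i where Ci: "C = remaining V \<omega> i \<inter> \<omega> !! i" using output_memE by blast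
  have ru: "u \<in> remaining V \<omega> i" "u \<in> \<omega> !! i" using C(2) unfolding Ci by blast+
  have rv: "v \<in> remaining V \<omega> i" "v \<in> \<omega> !! i" using C(3) unfolding Ci by blast+
  have nu: "\<forall>j<i. u \<notin> \<omega> !! j" using ru(1) unfolding remaining_mem by blast
  have nv: "\<forall>j<i. v \<notin> \<omega> !! j" using rv(1) unfolding remaining_mem by blast
  show "\<exists>i. (\<forall>j<i. \<omega>!!j \<notin> {S. u \<in> S \<or> v \<in> S}) \<and> \<omega>!!i \<in> {S. {u,v} \<subseteq> S}"
  proof (intro exI[of _ i] conjI allI impI)
    fix j assume "j < i"
    then show "\<omega>!!j \<notin> {S. u \<in> S \<or> v \<in> S}" using nu nv by simp
  next
    show "\<omega>!!i \<in> {S. {u,v} \<subseteq> S}" using ru(2) rv(2) by simp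
  qed
next
  assume "\<exists>i. (\<forall>j<i. \<omega>!!j \<notin> {S. u \<in> S \<or> v \<in> S}) \<and> \<omega>!!i \<in> {S. {u,v} \<subseteq> S}"
  then obtain i where i: "\<forall>j<i. \<omega>!!j \<notin> {S. u \<in> S \<or> v \<in> S}" "\<omega>!!i \<in> {S. {u,v} \<subseteq> S}" by blast
  have nu: "\<forall>j<i. u \<notin> \<omega> !! j" using i(1) by simp
  have nv: "\<forall>j<i. v \<notin> \<omega> !! j" using i(1) by simp
  have "u \<in> remaining V \<omega> i" using nu assms(1) by (simp add: remaining_mem)
  moreover have "u \<in> \<omega> !! i" using i(2) by simp
  ultimately have uv1: "u \<in> remaining V \<omega> i \<inter> \<omega> !! i" by (rule IntI)
  have "v \<in> remaining V \<omega> i" using nv assms(2) by (simp add: remaining_mem)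
  moreover have "v \<in> \<omega> !! i" using i(2) by simp
  ultimately have uv2: "v \<in> remaining V \<omega> i \<inter> \<omega> !! i" by (rule IntI)
  have o: "remaining V \<omega> i \<inter> \<omega> !! i \<in> rounding_output V \<omega>"
    by (rule output_memI[OF uv1])
  show "\<exists>C\<in>rounding_output V \<omega>. u \<in> C \<and> v \<in> C"
    using o uv1 uv2 by (intro bexI[of _ "remaining V \<omega> i \<inter> \<omega> !! i"] conjI)
qed

lemma hit_single: "(\<exists>i. (\<forall>j<i. \<omega>!!j \<notin> {S. w \<in> S}) \<and> \<omega>!!i \<in> {S. w \<in> S}) \<longleftrightarrow> (\<exists>i. w \<in> \<omega>!!i)"
proof
  assume "\<exists>i. (\<forall>j<i. \<omega>!!j \<notin> {S. w \<in> S}) \<and> \<omega>!!i \<in> {S. w \<in> S}"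
  then obtain i where "\<omega>!!i \<in> {S. w \<in> S}" by blast
  then show "\<exists>i. w \<in> \<omega>!!i" by (intro exI[of _ i]) simp
next
  assume "\<exists>i. w \<in> \<omega>!!i"
  then obtain n where n: "w \<in> \<omega>!!n" "\<forall>m<n. \<not> w \<in> \<omega>!!m"
    using exists_least_iff[of "\<lambda>i. w \<in> \<omega>!!i", THEN iffD1] by blast
  show "\<exists>i. (\<forall>j<i. \<omega>!!j \<notin> {S. w \<in> S}) \<and> \<omega>!!i \<in> {S. w \<in> S}"
    using n by (intro exI[of _ n]) simp
qed

lemma diff_iff:
  assumes "u \<in> V" "v \<in> V"
  shows "(\<exists>C1\<in>rounding_output V \<omega>. \<exists>C2\<in>rounding_output V \<omega>. C1 \<noteq> C2 \<and> u \<in> C1 \<and> v \<in> C2) \<longleftrightarrow>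
    (\<exists>i. u \<in> \<omega>!!i) \<and> (\<exists>i. v \<in> \<omega>!!i) \<and> \<not> (\<exists>C\<in>rounding_output V \<omega>. u \<in> C \<and> v \<in> C)"
proof
  assume "\<exists>C1\<in>rounding_output V \<omega>. \<exists>C2\<in>rounding_output V \<omega>. C1 \<noteq> C2 \<and> u \<in> C1 \<and> v \<in> C2"
  then obtain C1 C2 where C: "C1 \<in> rounding_output V \<omega>" "C2 \<in> rounding_output V \<omega>" "C1 \<noteq> C2" "u \<in> C1" "v \<in> C2" by blast
  obtain i where i: "C1 = remaining V \<omega> i \<inter> \<omega> !! i" using output_memE[OF C(1)] by blast
  obtain k where k: "C2 = remaining V \<omega> k \<inter> \<omega> !! k" using output_memE[OF C(2)] by blast
  have ik: "remaining V \<omega> i \<inter> \<omega> !! i \<noteq> remaining V \<omega> k \<inter> \<omega> !! k"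
    "u \<in> remaining V \<omega> i \<inter> \<omega> !! i" "v \<in> remaining V \<omega> k \<inter> \<omega> !! k"
    using C(3,4,5) unfolding i k by simp_all
  have "\<not> (\<exists>C\<in>rounding_output V \<omega>. u \<in> C \<and> v \<in> C)"
  proof
    assume "\<exists>C\<in>rounding_output V \<omega>. u \<in> C \<and> v \<in> C"
    then obtain C where C: "C \<in> rounding_output V \<omega>" "u \<in> C" "v \<in> C" by blast
    obtain m where mC: "C = remaining V \<omega> m \<inter> \<omega> !! m" using output_memE[OF C(1)] by blast
    have m: "u \<in> remaining V \<omega> m \<inter> \<omega> !! m" "v \<in> remaining V \<omega> m \<inter> \<omega> !! m"
      using C(2,3) unfolding mC by simp_all
    have "i = m" using cluster_unique[OF ik(2) m(1)] .
    moreover have "k = m" using cluster_unique[OF ik(3) m(2)] .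
    ultimately show False using ik(1) by simp
  qed
  moreover have "\<exists>i. u \<in> \<omega>!!i" using ik(2) by (intro exI[of _ i]) simp
  moreover have "\<exists>i. v \<in> \<omega>!!i" using ik(3) by (intro exI[of _ k]) simp
  ultimately show "(\<exists>i. u \<in> \<omega>!!i) \<and> (\<exists>i. v \<in> \<omega>!!i) \<and> \<not> (\<exists>C\<in>rounding_output V \<omega>. u \<in> C \<and> v \<in> C)"
    by (intro conjI)
next
  assume h: "(\<exists>i. u \<in> \<omega>!!i) \<and> (\<exists>i. v \<in> \<omega>!!i) \<and> \<not> (\<exists>C\<in>rounding_output V \<omega>. u \<in> C \<and> v \<in> C)"
  obtain i where i: "u \<in> \<omega>!!i" "\<forall>j<i. u \<notin> \<omega>!!j"
    using h exists_least_iff[of "\<lambda>i. u \<in> \<omega>!!i", THEN iffD1] by blast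
  obtain k where k: "v \<in> \<omega>!!k" "\<forall>j<k. v \<notin> \<omega>!!j"
    using h exists_least_iff[of "\<lambda>i. v \<in> \<omega>!!i", THEN iffD1] by blast
  have "u \<in> remaining V \<omega> i" unfolding remaining_mem using i(2) assms(1) by blast
  then have ui: "u \<in> remaining V \<omega> i \<inter> \<omega> !! i" using i(1) by blast
  have "v \<in> remaining V \<omega> k" unfolding remaining_mem using k(2) assms(2) by blast
  then have vk: "v \<in> remaining V \<omega> k \<inter> \<omega> !! k" using k(1) by blast
  have o1: "remaining V \<omega> i \<inter> \<omega> !! i \<in> rounding_output V \<omega>" by (rule output_memI[OF ui])
  have o2: "remaining V \<omega> k \<inter> \<omega> !! k \<in> rounding_output V \<omega>" by (rule output_memI[OF vk])
  have ne: "remaining V \<omega> i \<inter> \<omega> !! i \<noteq> remaining V \<omega> k \<inter> \<omega> !! k"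
  proof
    assume eq: "remaining V \<omega> i \<inter> \<omega> !! i = remaining V \<omega> k \<inter> \<omega> !! k"
    have "v \<in> remaining V \<omega> i \<inter> \<omega> !! i" using vk unfolding eq .
    have "\<exists>C\<in>rounding_output V \<omega>. u \<in> C \<and> v \<in> C"
      using o1 ui \<open>v \<in> remaining V \<omega> i \<inter> \<omega> !! i\<close>
      by (intro bexI[of _ "remaining V \<omega> i \<inter> \<omega> !! i"] conjI)
    then show False using h by (elim conjE notE)
  qed
  then show "\<exists>C1\<in>rounding_output V \<omega>. \<exists>C2\<in>rounding_output V \<omega>. C1 \<noteq> C2 \<and> u \<in> C1 \<and> v \<in> C2"
    using o1 o2 ui vk \<open>remaining V \<omega> i \<inter> \<omega> !! i \<noteq> remaining V \<omega> k \<inter> \<omega> !! k\<close>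
    by (intro bexI[of _ "remaining V \<omega> i \<inter> \<omega> !! i"] bexI[of _ "remaining V \<omega> k \<inter> \<omega> !! k"] conjI)
qed

theorem lemma1:
  fixes V :: "'a set" and z x :: "'a set \<Rightarrow> real" and u v :: 'a
  assumes "finite V"
    and "cluster_lp_feasible V z x"
    and "u \<in> V" and "v \<in> V" and "u \<noteq> v"
  shows "measure (rounding_space V z)
           {\<omega> \<in> space (rounding_space V z).
              \<exists>C1\<in>rounding_output V \<omega>. \<exists>C2\<in>rounding_output V \<omega>.
                 C1 \<noteq> C2 \<and> u \<in> C1 \<and> v \<in> C2}
         = 2 * x {u, v} / (1 + x {u, v}) \<and>
         measure (rounding_space V z)
           {\<omega> \<in> space (rounding_space V z).
              \<exists>C\<in>rounding_output V \<omega>. u \<in> C \<and> v \<in> C}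
         = (1 - x {u, v}) / (1 + x {u, v})"
proof -
  note fin = assms(1) and feas = assms(2) and uV = assms(3) and vV = assms(4)
  define CS where "CS = cluster_sets V"
  define Z where "Z = (\<Sum>S\<in>CS. z S)"
  have finCS: "finite CS" unfolding CS_def cluster_sets_def
    using fin by (rule finite_subset[rotated, OF finite_Pow_iff[THEN iffD2]]) auto
  have F1: "(\<Sum>S\<in>{S\<in>CS. w \<in> S}. z S) = 1" if "w \<in> V" for w
    using feas that unfolding cluster_lp_feasible_def CS_def by blast
  have F2: "(\<Sum>S\<in>{S\<in>CS. {u,v} \<subseteq> S}. z S) = 1 - x {u,v}"
    using feas uV vV assms(5) unfolding cluster_lp_feasible_def CS_def by blast
  have F3: "S \<in> CS \<Longrightarrow> z S \<ge> 0" for S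
    using feas unfolding cluster_lp_feasible_def CS_def by blast
  have Zge: "Z \<ge> 1"
  proof -
    have "(\<Sum>S\<in>{S\<in>CS. u \<in> S}. z S) \<le> Z" unfolding Z_def
      using finCS F3 by (intro sum_mono2) auto
    then show ?thesis using F1[OF uV] by simp
  qed
  define f where "f S = (if S \<in> CS then z S / Z else 0)" for S
  have fnn: "0 \<le> f S" for S unfolding f_def using F3 Zge by auto
  have fint: "(\<integral>\<^sup>+S. ennreal (f S) \<partial>count_space UNIV) = 1"
  proof -
    have "(\<integral>\<^sup>+S. ennreal (f S) \<partial>count_space UNIV) = (\<Sum>S\<in>CS. ennreal (f S))"
      using finCS by (intro nn_integral_count_space') (auto simp: f_def)
    also have "\<dots> = ennreal (\<Sum>S\<in>CS. f S)" using fnn by (simp add: sum_ennreal)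
    also have "(\<Sum>S\<in>CS. f S) = (\<Sum>S\<in>CS. z S) / Z" unfolding f_def by (simp add: sum_divide_distrib)
    also have "\<dots> = 1" using Zge unfolding Z_def by simp
    finally show ?thesis by simp
  qed
  define p where "p = rounding_pmf V z"
  have p_eq: "p = embed_pmf f" unfolding p_def rounding_pmf_def f_def CS_def Z_def by simp
  have pmf_p: "pmf p S = f S" for S unfolding p_eq by (rule pmf_embed_pmf[OF fnn fint])
  have setp: "set_pmf p \<subseteq> CS" unfolding set_pmf_eq pmf_p f_def by auto
  have mp: "measure_pmf.prob p X = (\<Sum>S\<in>{S\<in>CS. S \<in> X}. z S) / Z" for X
  proof -
    have "measure_pmf.prob p X = measure_pmf.prob p (X \<inter> CS)"
      using measure_Int_set_pmf[of p X] measure_Int_set_pmf[of p "X \<inter> CS"] setp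
      by (metis Int_absorb2 Int_assoc Int_commute)
    also have "\<dots> = (\<Sum>S\<in>X \<inter> CS. pmf p S)" using finCS by (intro measure_measure_pmf_finite) auto
    also have "\<dots> = (\<Sum>S\<in>{S\<in>CS. S \<in> X}. z S / Z)" unfolding pmf_p f_def
      by (intro sum.cong) auto
    finally show ?thesis by (simp add: sum_divide_distrib)
  qed
  define A where "A = {S::'a set. {u,v} \<subseteq> S}"
  define B where "B = {S::'a set. u \<in> S \<or> v \<in> S}"
  define c where "c = (\<Sum>S\<in>{S\<in>CS. {u,v} \<subseteq> S}. z S)"
  have c0: "c \<ge> 0" unfolding c_def using F3 by (intro sum_nonneg) auto
  have c1: "c \<le> 1"
  proof -
    have "c \<le> (\<Sum>S\<in>{S\<in>CS. u \<in> S}. z S)" unfolding c_def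
      using finCS F3 by (intro sum_mono2) auto
    then show ?thesis using F1[OF uV] by simp
  qed
  have xc: "x {u,v} = 1 - c" using F2 unfolding c_def by simp
  have pA: "measure_pmf.prob p A = c / Z" unfolding mp A_def c_def by simp
  have pB: "measure_pmf.prob p B = (2 - c) / Z"
  proof -
    have "{S\<in>CS. S \<in> B} = {S\<in>CS. u \<in> S} \<union> {S\<in>CS. v \<in> S}" unfolding B_def by auto
    moreover have "{S\<in>CS. u \<in> S} \<inter> {S\<in>CS. v \<in> S} = {S\<in>CS. {u,v} \<subseteq> S}" by auto
    ultimately have "(\<Sum>S\<in>{S\<in>CS. S \<in> B}. z S) = 1 + 1 - c"
      using sum_Un[of "{S\<in>CS. u \<in> S}" "{S\<in>CS. v \<in> S}" z] finCS F1[OF uV] F1[OF vV]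
      unfolding c_def by simp
    then show ?thesis unfolding mp by simp
  qed
  have pBpos: "measure_pmf.prob p B > 0" unfolding pB using c1 Zge by simp
  have pu: "measure_pmf.prob p {S. w \<in> S} = 1 / Z" if "w \<in> V" for w
    unfolding mp using F1[OF that] by simp
  let ?S = "stream_space (measure_pmf p)"
  interpret S: prob_space ?S by (rule prob_space.prob_space_stream_space[OF prob_space_measure_pmf])
  have RS: "rounding_space V z = ?S" unfolding rounding_space_def p_def ..
  have sp: "space ?S = UNIV" by (simp add: space_stream_space)
  define E where "E = {\<omega>. \<exists>i. (\<forall>j<i. \<omega>!!j \<notin> B) \<and> \<omega>!!i \<in> A}"
  define H where "H w = {\<omega>. \<exists>i. (\<forall>j<i. \<omega>!!j \<notin> {S. w \<in> S}) \<and> \<omega>!!i \<in> {S. w \<in> S}}" for w :: 'a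
  have AB: "A \<subseteq> B" unfolding A_def B_def by auto
  have mE: "S.prob E = (1 - x {u,v}) / (1 + x {u,v})"
    unfolding E_def hit_prob[OF AB pBpos] pA pB xc using Zge by simp
  have mH: "S.prob (H w) = 1" if "w \<in> V" for w
  proof -
    have "S.prob (H w) = measure_pmf.prob p {S. w \<in> S} / measure_pmf.prob p {S. w \<in> S}"
      unfolding H_def by (rule hit_prob) (unfold pu[OF that], use Zge in auto)
    then show ?thesis using pu[OF that] Zge by simp
  qed
  have sE: "E \<in> S.events" unfolding E_def by (rule hit_sets)
  have sH: "H w \<in> S.events" for w unfolding H_def by (rule hit_sets)
  have same_eq: "{\<omega> \<in> space ?S. \<exists>C\<in>rounding_output V \<omega>. u \<in> C \<and> v \<in> C} = E"
  proof (rule set_eqI)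
    fix \<omega>
    show "\<omega> \<in> {\<omega> \<in> space ?S. \<exists>C\<in>rounding_output V \<omega>. u \<in> C \<and> v \<in> C} \<longleftrightarrow> \<omega> \<in> E"
      unfolding sp E_def A_def B_def using same_iff[OF uV vV, of \<omega>] by (simp only: mem_Collect_eq UNIV_I simp_thms)
  qed
  have Hm: "\<omega> \<in> H w \<longleftrightarrow> (\<exists>i. w \<in> \<omega>!!i)" for w \<omega>
    unfolding H_def mem_Collect_eq by (rule hit_single[unfolded mem_Collect_eq])
  have diff_eq: "{\<omega> \<in> space ?S. \<exists>C1\<in>rounding_output V \<omega>. \<exists>C2\<in>rounding_output V \<omega>.
                 C1 \<noteq> C2 \<and> u \<in> C1 \<and> v \<in> C2} = (H u \<inter> H v) - E"
  proof (rule set_eqI)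
    fix \<omega>
    have e0: "\<omega> \<in> {\<omega> \<in> UNIV. \<exists>C\<in>rounding_output V \<omega>. u \<in> C \<and> v \<in> C} \<longleftrightarrow> \<omega> \<in> E"
      by (simp only: same_eq[unfolded sp])
    have e1: "(\<exists>C\<in>rounding_output V \<omega>. u \<in> C \<and> v \<in> C) \<longleftrightarrow> \<omega> \<in> E"
      using e0 by (simp only: mem_Collect_eq UNIV_I simp_thms)
    show "\<omega> \<in> {\<omega> \<in> space ?S. \<exists>C1\<in>rounding_output V \<omega>. \<exists>C2\<in>rounding_output V \<omega>.
                 C1 \<noteq> C2 \<and> u \<in> C1 \<and> v \<in> C2} \<longleftrightarrow> \<omega> \<in> (H u \<inter> H v) - E"
      unfolding sp by (simp only: mem_Collect_eq UNIV_I simp_thms Diff_iff Int_iff Hm diff_iff[OF uV vV] e1 conj_assoc)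
  qed
  have EH: "E \<subseteq> H u \<inter> H v"
  proof
    fix \<omega> assume "\<omega> \<in> E"
    then obtain i where "\<omega>!!i \<in> A" unfolding E_def by blast
    then have "u \<in> \<omega>!!i" "v \<in> \<omega>!!i" unfolding A_def by auto
    then show "\<omega> \<in> H u \<inter> H v" unfolding Int_iff Hm by blast
  qed
  have mHH: "S.prob (H u \<inter> H v) = 1"
  proof -
    have "S.prob (space ?S - (H u \<inter> H v)) \<le> S.prob (space ?S - H u) + S.prob (space ?S - H v)"
      using measure_Un_le[of "space ?S - H u" ?S "space ?S - H v"] sH
      by (simp add: Diff_Int)
    also have "\<dots> = 0" using S.prob_compl[OF sH] mH uV vV by simp
    finally have "S.prob (space ?S - (H u \<inter> H v)) \<le> 0" .
    then have "1 - S.prob (H u \<inter> H v) \<le> 0" using S.prob_compl[of "H u \<inter> H v"] sH by simp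
    then show ?thesis using S.prob_le_1[of "H u \<inter> H v"] by simp
  qed
  have "S.prob ((H u \<inter> H v) - E) = 1 - (1 - x {u,v}) / (1 + x {u,v})"
    using S.finite_measure_Diff[of "H u \<inter> H v" E] sE sH EH mHH mE by simp
  also have "\<dots> = 2 * x {u, v} / (1 + x {u, v})" using xc c1 by (simp add: field_simps)
  finally show ?thesis unfolding RS same_eq diff_eq mE by simp
qed

end
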